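(* Let $n\in\mathbb N_+$ and let $\nu$ be a probability measure on $\mathbb R$ with compact support such that $\int_\mathbb R\lambda\,d\nu=0$. Let $\lambda_{\max}=\max\operatorname{supp}\nu$ and suppose $g(\lambda)=\nu\{x\ge\lambda\}^{1/n}$ is concave on $(-\infty,\lambda_{\max})$. Then $g(-t\lambda_{\max})\ge1-\frac{1}{\sqrt{nt}}$ for all $t>0$. *)

theory Defs
  imports "HOL-Probability.Probability"
begin

definition measure_support :: "real measure \<Rightarrow> real set" where
  "measure_support M = {x. \<forall>U. open U \<and> x \<in> U \<longrightarrow> emeasure M U > 0}"

end

theory Submission
  imports Defs
begin

lemma support_AE:
  fixes M :: "real measure"
  assumes borel: "sets M = sets borel"
  shows "AE x in M. x \<in> measure_support M"
proof -
  define F where "F = {U::real set. open U \<and> emeasure M U = 0}"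
  have compl: "- measure_support M = \<Union>F"
  proof
    show "- measure_support M \<subseteq> \<Union>F"
    proof
      fix x assume "x \<in> - measure_support M"
      then obtain U where "open U" "x \<in> U" "\<not> emeasure M U > 0"
        unfolding measure_support_def by auto
      then show "x \<in> \<Union>F" unfolding F_def by (auto simp: not_gr_zero)
    qed
    show "\<Union>F \<subseteq> - measure_support M"
      unfolding F_def measure_support_def by fastforce
  qed
  obtain F' where F': "F' \<subseteq> F" "countable F'" "\<Union>F' = \<Union>F"
    using Lindelof[of F] unfolding F_def by blast
  have "\<Union>(id ` F') \<in> null_sets M"
  proof (rule null_sets_UN')
    show "countable F'" by fact
    fix U assume "U \<in> F'"
    then have "open U" "emeasure M U = 0" using F' unfolding F_def by auto
    moreover have "U \<in> sets M" using \<open>open U\<close> borel by simp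
    ultimately show "id U \<in> null_sets M" by (simp add: null_sets_def)
  qed
  then have "- measure_support M \<in> null_sets M" using compl F' by simp
  then show ?thesis by (rule AE_I') auto
qed

lemma real_part:
  fixes n :: nat and t p :: real
  assumes n: "n > 0" and t: "t > 0" and p: "t \<le> (1 + t) * p" and p1: "p \<le> 1"
  shows "p powr (1 / real n) \<ge> 1 - 1 / sqrt (real n * t)"
proof (cases "real n * t \<le> 1")
  case True
  then have "sqrt (real n * t) \<le> 1" by simp
  moreover have "sqrt (real n * t) > 0" using n t by simp
  ultimately have "1 / sqrt (real n * t) \<ge> 1" by simp
  moreover have "0 \<le> p powr (1 / real n)" by simp
  ultimately show ?thesis by linarith
next
  case False
  define x where "x = 1 / (real n * t)"
  have x0: "0 < x" "x < 1" using False n t unfolding x_def by auto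
  have b1: "1 + real n * x \<le> (1 + x) ^ n" using Bernoulli_inequality[of x n] x0 by simp
  have b2: "(1 - x) ^ n * (1 + x) ^ n \<le> 1"
  proof -
    have "(1 - x) ^ n * (1 + x) ^ n = (1 - x * x) ^ n" by (simp add: power_mult_distrib[symmetric] algebra_simps)
    also have "\<dots> \<le> 1" using x0 by (intro power_le_one) (auto simp: mult_le_one)
    finally show ?thesis .
  qed
  have nx: "real n * x = 1 / t" unfolding x_def using n by simp
  have "(1 - x) ^ n * (1 + 1 / t) \<le> 1"
  proof -
    have "(1 - x) ^ n * (1 + 1/t) \<le> (1 - x) ^ n * (1 + x) ^ n"
      using b1 x0 nx by (intro mult_left_mono) auto
    then show ?thesis using b2 by linarith
  qed
  then have "(1 - x) ^ n * (t + 1) \<le> t" using t by (simp add: field_simps)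
  then have "(1 - x) ^ n * (1 + t) \<le> p * (1 + t)" using p by (simp add: algebra_simps)
  then have s: "(1 - x) ^ n \<le> p" using t by simp
  have "1 - x = ((1 - x) ^ n) powr (1 / real n)"
    using x0 n by (simp add: powr_realpow[symmetric] powr_powr)
  also have "\<dots> \<le> p powr (1 / real n)"
    using s x0 by (intro powr_mono2) auto
  finally have "1 - x \<le> p powr (1 / real n)" .
  moreover have "x \<le> 1 / sqrt (real n * t)"
  proof -
    have g1: "sqrt (real n * t) \<ge> 1" using False by simp
    have "sqrt (real n * t) * 1 \<le> sqrt (real n * t) * sqrt (real n * t)"
      using g1 by (intro mult_left_mono) auto
    then have "sqrt (real n * t) \<le> real n * t" using n t by simp
    moreover have "sqrt (real n * t) > 0" using n t by simp
    ultimately show ?thesis unfolding x_def by (intro divide_left_mono) auto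
  qed
  ultimately show ?thesis by linarith
qed

theorem mainTheorem12:
  fixes M :: "real measure" and n :: nat
  assumes n_pos: "n > 0"
    and prob: "prob_space M"
    and borel: "sets M = sets borel"
    and cpt: "compact (measure_support M)"
    and mean0: "(\<integral>x. x \<partial>M) = 0"
    and conc: "concave_on {..<Sup (measure_support M)}
                 (\<lambda>l. (measure M {x. x \<ge> l}) powr (1 / real n))"
  shows "\<forall>t::real. t > 0 \<longrightarrow>
           (measure M {x. x \<ge> - t * Sup (measure_support M)}) powr (1 / real n)
             \<ge> 1 - 1 / sqrt (real n * t)"
proof (intro allI impI)
  fix t :: real assume t: "t > 0"
  define S where "S = measure_support M"
  define L where "L = Sup S"
  interpret P: prob_space M by (rule prob)
  have sp: "space M = UNIV" using sets_eq_imp_space_eq[OF borel] by simp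
  have AES: "AE x in M. x \<in> S" unfolding S_def using support_AE[OF borel] .
  have Sne: "S \<noteq> {}"
  proof
    assume "S = {}"
    then have "AE x in M. False" using AES by simp
    then show False using P.AE_False by simp
  qed
  have bS: "bounded S" using cpt unfolding S_def by (rule compact_imp_bounded)
  have bdd: "bdd_above S" using bS by (rule bounded_imp_bdd_above)
  obtain B where B: "\<forall>x\<in>S. norm x \<le> B" using bS unfolding bounded_iff by blast
  have AEL: "AE x in M. x \<le> L"
    using AES by (rule eventually_mono) (simp add: L_def cSup_upper[OF _ bdd])
  have meas: "(\<lambda>x::real. x) \<in> borel_measurable M" by (rule measurable_ident_sets[OF borel])
  have intx: "integrable M (\<lambda>x::real. x)"
    by (rule P.integrable_const_bound[where B=B]) (use AES B meas in \<open>auto elim!: eventually_mono\<close>)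
  have L0: "0 \<le> L"
  proof -
    have "(\<integral>x. x \<partial>M) \<le> (\<integral>x. L \<partial>M)" by (rule integral_mono_AE) (use intx AEL in auto)
    then show ?thesis using mean0 by (simp add: P.prob_space)
  qed
  have setm: "\<And>c. {x::real. c \<le> x} \<in> sets M" using borel by simp
  show "measure M {x. x \<ge> - t * Sup (measure_support M)} powr (1 / real n)
             \<ge> 1 - 1 / sqrt (real n * t)"
  proof (cases "L = 0")
    case True
    have AE0: "AE x in M. x \<le> 0" using AEL True by simp
    have "(\<integral>x. - x \<partial>M) = 0" using mean0 by simp
    then have "AE x in M. - x = 0"
      using integral_nonneg_eq_0_iff_AE[of M "\<lambda>x. - x"] intx AE0 by auto
    then have "AE x in M. 0 \<le> x" by (auto elim: eventually_mono)
    then have "measure M {x. 0 \<le> x} = 1"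
      using P.prob_Collect_eq_1[of "\<lambda>x. 0 \<le> x"] setm sp by simp
    moreover have "1 - 1 / sqrt (real n * t) \<le> 1" using n_pos t by simp
    ultimately show ?thesis using True by (simp add: L_def S_def)
  next
    case False
    then have Lp: "L > 0" using L0 by simp
    define a where "a = - t * L"
    define p where "p = measure M {x. a \<le> x}"
    have a0: "a < 0" using Lp t unfolding a_def by simp
    have i1: "integrable M (\<lambda>x. a)" by (rule P.integrable_const)
    have i2: "integrable M (indicator {x. a \<le> x} :: real \<Rightarrow> real)"
      using setm[of a] by (intro integrable_real_indicator) (auto simp: P.emeasure_space_1 less_top[symmetric])
    have i3: "integrable M (\<lambda>x. (L - a) * indicator {x. a \<le> x} x)"
      using integrable_mult_right[OF i2, of "L - a"] by simp
    have intg: "integrable M (\<lambda>x. a + (L - a) * indicator {x. a \<le> x} x)"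
      using Bochner_Integration.integrable_add[OF i1 i3] by simp
    have "(\<integral>x. x \<partial>M) \<le> (\<integral>x. a + (L - a) * indicator {x. a \<le> x} x \<partial>M)"
    proof (rule integral_mono_AE[OF intx intg])
      show "AE x in M. x \<le> a + (L - a) * indicator {x. a \<le> x} x"
        using AEL by eventually_elim (auto simp: indicator_def)
    qed
    also have "\<dots> = (\<integral>x. a \<partial>M) + (\<integral>x. (L - a) * indicator {x. a \<le> x} x \<partial>M)"
      by (rule Bochner_Integration.integral_add[OF i1 i3])
    also have "\<dots> = a + (L - a) * p"
      using setm[of a] P.prob_space unfolding p_def
      by simp
    finally have "0 \<le> a + (L - a) * p" using mean0 by simp
    then have "t * L \<le> (1 + t) * p * L" unfolding a_def by (simp add: algebra_simps)
    then have pt: "t \<le> (1 + t) * p" using Lp by simp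
    have "p \<le> 1" unfolding p_def by simp
    from real_part[OF n_pos t pt this] show ?thesis
      unfolding p_def a_def L_def S_def by simp
  qed
qed

end
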